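(* For $0<p<2$, $$\lim_{\eta\to0}\frac{\bar\rho_p(\eta)}{\eta^p\log^{2-p}\log\frac1\eta}=1.$$
   Context: $\mathcal F_p(\eta)$ denotes the set of probability distributions $F$ on $[1,\infty)$ with $\int\log^p(\mu)\,dF(\mu)\le\eta^p$. For a scalar random $\mu\sim F$ and $X\mid\mu\sim\mathrm{Exp}(\mu)$ (exponential with mean $\mu$), the univariate minimax-Bayes risk is $\bar\rho_p(\eta)=\inf_\delta\sup_{F\in\mathcal F_p(\eta)}\mathbb{E}_F\mathbb{E}_\mu(\log\delta(X)-\log\mu)^2$, the infimum over measurable $\delta:[0,\infty)\to(0,\infty)$. *)

theory Defs
  imports "HOL-Probability.Probability"
begin

definition prior_class :: "real \<Rightarrow> real \<Rightarrow> real measure set" where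
  "prior_class p \<eta> = {F. prob_space F \<and> sets F = sets borel \<and> emeasure F {..<1} = 0 \<and>
      (\<integral>\<^sup>+ \<mu>. ennreal ((ln \<mu>) powr p) \<partial>F) \<le> ennreal (\<eta> powr p)}"

definition estimators :: "(real \<Rightarrow> real) set" where
  "estimators = {\<delta>. \<delta> \<in> borel_measurable borel \<and> (\<forall>x\<ge>0. \<delta> x > 0)}"

text \<open>Bayes risk E_F E_mu (log delta(X) - log mu)^2, X | mu ~ Exp with mean mu
  (i.e. rate 1/mu).\<close>
definition bayes_risk :: "real measure \<Rightarrow> (real \<Rightarrow> real) \<Rightarrow> ennreal" where
  "bayes_risk F \<delta> = (\<integral>\<^sup>+ \<mu>. (\<integral>\<^sup>+ x. ennreal (exponential_density (1 / \<mu>) x *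
       (ln (\<delta> x) - ln \<mu>)\<^sup>2) \<partial>lborel) \<partial>F)"

definition minimax_bayes_risk :: "real \<Rightarrow> real \<Rightarrow> ennreal" where
  "minimax_bayes_risk p \<eta> = (INF \<delta>\<in>estimators. SUP F\<in>prior_class p \<eta>. bayes_risk F \<delta>)"

end

theory Submission
  imports Defs "HOL-Real_Asymp.Real_Asymp"
begin
definition rsk :: "(real \<Rightarrow> real) \<Rightarrow> real \<Rightarrow> ennreal" where
  "rsk \<delta> \<mu> = (\<integral>\<^sup>+ x. ennreal (exponential_density (1 / \<mu>) x * (ln (\<delta> x) - ln \<mu>)\<^sup>2) \<partial>lborel)"



lemma quad_lower:
  fixes a b d L k :: real
  assumes "0 \<le> a" "0 \<le> b" "b \<le> k * a" "0 \<le> k" "k \<le> 1"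
  shows "(1 - k) * b * L\<^sup>2 \<le> a * d\<^sup>2 + b * (d - L)\<^sup>2"
proof (cases "a + b = 0")
  case True
  then have "b = 0" using assms by linarith
  then show ?thesis using assms by simp
next
  case False
  then have pos: "a + b > 0" using assms by linarith
  have id: "(a + b) * (a * d\<^sup>2 + b * (d - L)\<^sup>2) = ((a + b) * d - b * L)\<^sup>2 + a * b * L\<^sup>2"
    by (simp add: power2_eq_square algebra_simps)
  have "(1 - k) * (a + b) \<le> a"
  proof -
    have "0 \<le> k * b" using assms by simp
    then have "(1 - k) * b \<le> b" by (simp add: algebra_simps)
    also have "\<dots> \<le> k * a" by fact
    finally show ?thesis by (simp add: algebra_simps)
  qed
  then have "(1 - k) * (a + b) * (b * L\<^sup>2) \<le> a * (b * L\<^sup>2)"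
    by (rule mult_right_mono) (use assms in simp)
  also have "\<dots> \<le> (a + b) * (a * d\<^sup>2 + b * (d - L)\<^sup>2)" unfolding id by (simp add: algebra_simps)
  finally have "(a + b) * ((1 - k) * b * L\<^sup>2) \<le> (a + b) * (a * d\<^sup>2 + b * (d - L)\<^sup>2)"
    by (simp add: algebra_simps)
  then show ?thesis using pos by simp
qed

lemma lower_risk:
  fixes \<delta> :: "real \<Rightarrow> real" and eps M :: real
  assumes [measurable]: "\<delta> \<in> borel_measurable borel"
    and e0: "0 < eps" and e1: "eps < 1" and M1: "1 < M"
    and k1: "1 / (M * (1 - eps)) \<le> 1"
  shows "ennreal ((ln M)\<^sup>2 * (1 - 1 / (M * (1 - eps))) * eps * (1 - exp (- ln (1 / eps) / M)))
         \<le> ennreal (1 - eps) * rsk \<delta> 1 + ennreal eps * rsk \<delta> M"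
proof -
  define k where "k = 1 / (M * (1 - eps))"
  define x0 where "x0 = ln (1 / eps)"
  define c where "c = (ln M)\<^sup>2 * (1 - k) * eps"
  have x0: "0 \<le> x0" unfolding x0_def using e0 e1 by simp
  have k0: "0 \<le> k" unfolding k_def using M1 e1 by simp
  have c0: "0 \<le> c" unfolding c_def using k1 e0 by (simp add: k_def)
  have ex0: "0 \<le> 1 - exp (- (x0 / M))" using x0 M1 by simp
  have "ennreal ((ln M)\<^sup>2 * (1 - k) * eps * (1 - exp (- x0 / M)))
      = ennreal c * ennreal (erlang_CDF 0 (1 / M) x0)"
    using x0 c0 ex0 by (simp add: c_def erlang_CDF_0 ennreal_mult[symmetric] mult.commute)
  also have "\<dots> = ennreal c * (\<integral>\<^sup>+ x. ennreal (exponential_density (1 / M) x) * indicator {..x0} x \<partial>lborel)"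
    using M1 by (simp add: nn_integral_erlang_density)
  also have "\<dots> = (\<integral>\<^sup>+ x. ennreal c * (ennreal (exponential_density (1 / M) x) * indicator {..x0} x) \<partial>lborel)"
    by (rule nn_integral_cmult[symmetric]) measurable
  also have "\<dots> \<le> (\<integral>\<^sup>+ x. ennreal (1 - eps) * ennreal (exponential_density (1 / 1) x * (ln (\<delta> x) - ln 1)\<^sup>2)
                     + ennreal eps * ennreal (exponential_density (1 / M) x * (ln (\<delta> x) - ln M)\<^sup>2) \<partial>lborel)"
  proof (rule nn_integral_mono)
    fix x :: real
    show "ennreal c * (ennreal (exponential_density (1 / M) x) * indicator {..x0} x)
       \<le> ennreal (1 - eps) * ennreal (exponential_density (1 / 1) x * (ln (\<delta> x) - ln 1)\<^sup>2)
         + ennreal eps * ennreal (exponential_density (1 / M) x * (ln (\<delta> x) - ln M)\<^sup>2)"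
    proof (cases "0 \<le> x \<and> x \<le> x0")
      case False
      then have "ennreal c * (ennreal (exponential_density (1 / M) x) * indicator {..x0} x) = 0"
        by (auto simp: exponential_density_def)
      then show ?thesis by (metis zero_le)
    next
      case True
      define a where "a = (1 - eps) * exp (- x)"
      define b where "b = eps * ((1 / M) * exp (- x * (1 / M)))"
      have a0: "0 \<le> a" unfolding a_def using e1 by simp
      have b0: "0 \<le> b" unfolding b_def using e0 M1 by simp
      have "b \<le> k * a"
      proof -
        have ex1: "exp (- (x / M)) \<le> 1" using True M1 by simp
        have "b = eps / M * exp (- (x / M))" unfolding b_def by simp
        also have "\<dots> \<le> eps / M * 1"
          by (rule mult_left_mono[OF ex1]) (use e0 M1 in simp)
        finally have "b \<le> eps * (1 / M)" by simp
        also have "eps \<le> exp (- x)"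
        proof -
          have "- x \<ge> - x0" using True by simp
          then have "exp (- x0) \<le> exp (- x)" by simp
          moreover have "exp (- x0) = eps" unfolding x0_def using e0 by (simp add: ln_div)
          ultimately show ?thesis by simp
        qed
        then have "eps * (1 / M) \<le> exp (- x) * (1 / M)" using M1 by (simp add: divide_right_mono)
        also have "\<dots> = k * a" unfolding k_def a_def using e1 by simp
        finally show ?thesis .
      qed
      from quad_lower[OF a0 b0 this k0 k1[folded k_def], of "ln M" "ln (\<delta> x)"]
      have q: "(1 - k) * b * (ln M)\<^sup>2 \<le> a * (ln (\<delta> x))\<^sup>2 + b * (ln (\<delta> x) - ln M)\<^sup>2" .
      have "c * ((1 / M) * exp (- x * (1 / M))) = (1 - k) * b * (ln M)\<^sup>2"
        unfolding c_def b_def by (simp add: field_simps)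
      with q have ineq: "c * ((1 / M) * exp (- x * (1 / M))) \<le> a * (ln (\<delta> x))\<^sup>2 + b * (ln (\<delta> x) - ln M)\<^sup>2"
        by simp
      have "ennreal c * (ennreal (exponential_density (1 / M) x) * indicator {..x0} x)
          = ennreal (c * ((1 / M) * exp (- x * (1 / M))))"
        using True c0 M1 by (simp add: exponential_density_def ennreal_mult[symmetric] mult.assoc)
      also have "\<dots> \<le> ennreal (a * (ln (\<delta> x))\<^sup>2 + b * (ln (\<delta> x) - ln M)\<^sup>2)"
        using ineq by (rule ennreal_leI)
      also have "\<dots> = ennreal (1 - eps) * ennreal (exponential_density (1 / 1) x * (ln (\<delta> x) - ln 1)\<^sup>2)
         + ennreal eps * ennreal (exponential_density (1 / M) x * (ln (\<delta> x) - ln M)\<^sup>2)"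
        using True a0 b0 e0 e1 M1
        by (simp add: exponential_density_def a_def b_def ennreal_mult[symmetric] ennreal_plus[symmetric] mult.assoc del: ennreal_plus)
      finally show ?thesis .
    qed
  qed
  also have "\<dots> = (\<integral>\<^sup>+ x. ennreal (1 - eps) * ennreal (exponential_density (1 / 1) x * (ln (\<delta> x) - ln 1)\<^sup>2) \<partial>lborel)
                   + (\<integral>\<^sup>+ x. ennreal eps * ennreal (exponential_density (1 / M) x * (ln (\<delta> x) - ln M)\<^sup>2) \<partial>lborel)"
    by (rule nn_integral_add) measurable
  also have "\<dots> = ennreal (1 - eps) * rsk \<delta> 1 + ennreal eps * rsk \<delta> M"
    unfolding rsk_def
    apply (subst (1 2) nn_integral_cmult)
      apply measurable
    done
  finally show ?thesis unfolding k_def x0_def c_def .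
qed
lemma meas_rsk: assumes [measurable]: "\<delta> \<in> borel_measurable borel"
  shows "rsk \<delta> \<in> borel_measurable borel"
  unfolding rsk_def exponential_density_def
  apply (rule lborel.borel_measurable_nn_integral)
  apply measurable
  done

definition tp :: "real \<Rightarrow> real \<Rightarrow> real measure" where
  "tp eps M = distr (measure_pmf (bernoulli_pmf eps)) borel (\<lambda>b. if b then M else 1)"

lemma tp_meas: "(\<lambda>b. if b then M else (1::real)) \<in> measure_pmf P \<rightarrow>\<^sub>M borel"
  by simp

lemma tp_risk:
  assumes [measurable]: "\<delta> \<in> borel_measurable borel" and "0 \<le> eps" "eps \<le> 1"
  shows "bayes_risk (tp eps M) \<delta> = ennreal (1 - eps) * rsk \<delta> 1 + ennreal eps * rsk \<delta> M"
proof -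
  have "bayes_risk (tp eps M) \<delta> = (\<integral>\<^sup>+ \<mu>. rsk \<delta> \<mu> \<partial>tp eps M)"
    unfolding bayes_risk_def rsk_def ..
  also have "\<dots> = (\<integral>\<^sup>+ b. rsk \<delta> (if b then M else 1) \<partial>measure_pmf (bernoulli_pmf eps))"
    unfolding tp_def using meas_rsk[OF assms(1)] by (intro nn_integral_distr[OF tp_meas]) simp
  also have "\<dots> = rsk \<delta> M * eps + rsk \<delta> 1 * (1 - eps)"
    using assms by simp
  finally show ?thesis by (simp add: mult.commute add.commute)
qed

lemma tp_prior:
  assumes "0 \<le> eps" "eps \<le> 1" "1 \<le> M" "0 < p" "eps * (ln M) powr p \<le> \<eta> powr p"
  shows "tp eps M \<in> prior_class p \<eta>"
proof -
  have ps: "prob_space (tp eps M)"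
    unfolding tp_def by (rule prob_space.prob_space_distr[OF prob_space_measure_pmf tp_meas])
  have ss: "sets (tp eps M) = sets borel" unfolding tp_def by simp
  have "emeasure (tp eps M) {..<1} = emeasure (measure_pmf (bernoulli_pmf eps)) ((\<lambda>b. if b then M else 1) -` {..<1} \<inter> space (measure_pmf (bernoulli_pmf eps)))"
    unfolding tp_def by (rule emeasure_distr[OF tp_meas]) simp
  also have "(\<lambda>b. if b then M else 1) -` {..<1} = {}" using assms(3) by (auto split: if_splits)
  finally have em: "emeasure (tp eps M) {..<1} = 0" by simp
  have "(\<integral>\<^sup>+ \<mu>. ennreal ((ln \<mu>) powr p) \<partial>tp eps M)
      = (\<integral>\<^sup>+ b. ennreal ((ln (if b then M else 1)) powr p) \<partial>measure_pmf (bernoulli_pmf eps))"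
    unfolding tp_def by (rule nn_integral_distr[OF tp_meas]) measurable
  also have "\<dots> = ennreal (eps * (ln M) powr p)"
    using assms by (simp add: ennreal_mult' mult.commute)
  also have "\<dots> \<le> ennreal (\<eta> powr p)" using assms(5) by (rule ennreal_leI)
  finally show ?thesis using ps ss em unfolding prior_class_def by blast
qed


lemma ftc_ln2:
  fixes t \<mu> :: real
  assumes t0: "0 < t"
  shows "(\<integral>\<^sup>+ x. ennreal (indicator {t..\<mu>} x * (ln \<mu> - ln x)\<^sup>2) \<partial>lborel) \<le> ennreal (2 * \<mu>)"
proof (cases "t \<le> \<mu>")
  case False
  then have "(\<lambda>x. ennreal (indicator {t..\<mu>} x * (ln \<mu> - ln x)\<^sup>2)) = (\<lambda>x. 0)" by auto
  then show ?thesis by (simp only:) simp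
next
  case True
  define F where "F x = x * ((ln \<mu> - ln x)\<^sup>2 + 2 * (ln \<mu> - ln x) + 2)" for x
  have "((\<lambda>x. (ln \<mu> - ln x)\<^sup>2) has_integral (F \<mu> - F t)) {t..\<mu>}"
  proof (rule fundamental_theorem_of_calculus[OF True])
    fix x assume x: "x \<in> {t..\<mu>}"
    then have xp: "0 < x" using t0 by auto
    have "(F has_real_derivative (ln \<mu> - ln x)\<^sup>2) (at x)"
      unfolding F_def
      by (rule derivative_eq_intros refl | use xp in \<open>simp add: field_simps power2_eq_square\<close>)+
    then show "(F has_vector_derivative (ln \<mu> - ln x)\<^sup>2) (at x within {t..\<mu>})"
      by (simp add: has_real_derivative_iff_has_vector_derivative[symmetric] has_field_derivative_at_within)
  qed
  from nn_integral_has_integral_lebesgue[OF _ this]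
  have eq: "(\<integral>\<^sup>+ x. ennreal (indicator {t..\<mu>} x * (ln \<mu> - ln x)\<^sup>2) \<partial>lborel) = ennreal (F \<mu> - F t)"
    by simp
  have "F t = t * ((ln \<mu> - ln t + 1)\<^sup>2 + 1)" unfolding F_def by (simp add: power2_eq_square algebra_simps)
  then have "0 \<le> F t" using t0 by simp
  then have "F \<mu> - F t \<le> 2 * \<mu>" by (simp add: F_def)
  then show ?thesis unfolding eq by (rule ennreal_leI)
qed

lemma ln_sq_le: fixes x :: real assumes "1 \<le> x" shows "(ln x)\<^sup>2 \<le> 4 * x"
proof -
  have s: "0 < sqrt x" using assms by simp
  have "ln x = 2 * ln (sqrt x)" using assms by (simp add: ln_sqrt)
  also have "\<dots> \<le> 2 * sqrt x" using ln_le_minus_one[OF s] by simp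
  finally have "ln x \<le> 2 * sqrt x" .
  moreover have "0 \<le> ln x" using assms by simp
  ultimately have "(ln x)\<^sup>2 \<le> (2 * sqrt x)\<^sup>2" by (rule power_mono)
  also have "\<dots> = 4 * x" using assms by (simp add: power_mult_distrib)
  finally show ?thesis .
qed


lemma big_mu:
  fixes t \<mu> p :: real
  assumes t0: "0 < t" and t: "2 \<le> ln t" and mt: "t < \<mu>" and p: "0 < p" "p < 2"
  shows "(ln \<mu>)\<^sup>2 * (t / \<mu>) \<le> ln t powr (2 - p) * ln \<mu> powr p"
proof -
  define s where "s = \<mu> / t"
  have s1: "1 < s" unfolding s_def using mt t0 by simp
  have mu: "\<mu> = t * s" unfolding s_def using t0 by simp
  have lt0: "0 < ln t" using t by simp
  have lm: "ln \<mu> = ln t + ln s" unfolding mu using t0 s1 by (simp add: ln_mult)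
  have ls0: "0 \<le> ln s" using s1 by simp
  have r1: "ln \<mu> / ln t \<le> 1 + ln s / 2"
  proof -
    have "ln s / ln t \<le> ln s / 2" using ls0 t lt0 by (intro divide_left_mono) simp_all
    then show ?thesis unfolding lm using lt0 by (simp add: add_divide_distrib)
  qed
  have r2: "(1 + ln s / 2)\<^sup>2 \<le> s"
  proof -
    have "1 + ln s / 2 \<le> exp (ln s / 2)" by (rule exp_ge_add_one_self)
    then have "(1 + ln s / 2)\<^sup>2 \<le> (exp (ln s / 2))\<^sup>2" using ls0 by (intro power_mono) auto
    also have "\<dots> = exp (ln s)" by (simp add: exp_double[symmetric])
    also have "\<dots> = s" using s1 by simp
    finally show ?thesis .
  qed
  have q1: "1 \<le> ln \<mu> / ln t" using lm ls0 lt0 by simp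
  have "(ln \<mu> / ln t) powr (2 - p) \<le> (ln \<mu> / ln t) powr 2"
    using q1 p by (intro powr_mono) auto
  also have "\<dots> = (ln \<mu> / ln t)\<^sup>2" using q1 by (simp add: powr_numeral)
  also have "\<dots> \<le> (1 + ln s / 2)\<^sup>2" using r1 q1 by (intro power_mono) auto
  also have "\<dots> \<le> s" by (rule r2)
  finally have key: "(ln \<mu> / ln t) powr (2 - p) \<le> s" .
  have lmp: "0 < ln \<mu>" using lm ls0 lt0 by simp
  have "(ln \<mu>)\<^sup>2 = ln \<mu> powr (2 - p) * ln \<mu> powr p"
    using lmp by (simp add: powr_add[symmetric] powr_numeral)
  also have "ln \<mu> powr (2 - p) = (ln \<mu> / ln t) powr (2 - p) * ln t powr (2 - p)"
    using lmp lt0 by (simp add: powr_divide)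
  finally have "(ln \<mu>)\<^sup>2 * (t / \<mu>) = ((ln \<mu> / ln t) powr (2 - p) / s) * (ln t powr (2 - p) * ln \<mu> powr p)"
    unfolding s_def by (simp add: field_simps)
  also have "\<dots> \<le> 1 * (ln t powr (2 - p) * ln \<mu> powr p)"
    using key s1 by (intro mult_right_mono) auto
  finally show ?thesis by simp
qed



definition dlt :: "real \<Rightarrow> real \<Rightarrow> real" where "dlt t x = (if x < t then 1 else x)"

lemma dlt_meas[measurable]: "dlt t \<in> borel_measurable borel"
  unfolding dlt_def by measurable

lemma mom0: "0 < l \<Longrightarrow> (\<integral>\<^sup>+ x. ennreal (exponential_density l x) \<partial>lborel) = 1"
  using nn_integral_erlang_ith_moment[of l 0 0] by simp

lemma mom1: "0 < l \<Longrightarrow> (\<integral>\<^sup>+ x. ennreal (exponential_density l x * x) \<partial>lborel) = ennreal (1 / l)"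
  using nn_integral_erlang_ith_moment[of l 0 1] by simp

lemma upper_small:
  fixes t \<mu> :: real
  assumes t: "exp 2 \<le> t" and mu: "1 \<le> \<mu>" "\<mu> \<le> exp 1"
  shows "rsk (dlt t) \<mu> \<le> ennreal ((ln \<mu>)\<^sup>2 + 16 * \<mu> * exp (- t / (2 * \<mu>)))"
proof -
  have t0: "0 < t" using t by (meson exp_gt_zero less_le_trans)
  have lt: "2 \<le> ln t" using t t0 by (metis ln_exp ln_le_cancel_iff exp_gt_zero)
  have m0: "0 < \<mu>" using mu by simp
  have lm0: "0 \<le> ln \<mu>" using mu by simp
  have lm1: "ln \<mu> \<le> 1" using mu m0 by (metis ln_exp ln_le_cancel_iff exp_gt_zero)
  define c where "c = 8 * exp (- t / (2 * \<mu>))"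
  have c0: "0 \<le> c" unfolding c_def by simp
  have pw: "ennreal (exponential_density (1 / \<mu>) x * (ln (dlt t x) - ln \<mu>)\<^sup>2)
      \<le> ennreal ((ln \<mu>)\<^sup>2) * ennreal (exponential_density (1 / \<mu>) x)
        + ennreal c * ennreal (exponential_density (1 / (2 * \<mu>)) x * x)" for x
  proof -
    have f0: "0 \<le> exponential_density (1 / \<mu>) x" using m0 by (simp add: exponential_density_def)
    have g0: "0 \<le> exponential_density (1 / (2 * \<mu>)) x * x"
      using m0 by (simp add: exponential_density_def)
    have "exponential_density (1 / \<mu>) x * (ln (dlt t x) - ln \<mu>)\<^sup>2
        \<le> (ln \<mu>)\<^sup>2 * exponential_density (1 / \<mu>) x + c * (exponential_density (1 / (2 * \<mu>)) x * x)"
    proof (cases "x < t")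
      case True
      then show ?thesis using c0 g0 by (simp add: dlt_def)
    next
      case False
      then have xt: "t \<le> x" by simp
      have x1: "1 \<le> x" using xt t by (meson exp_ge_add_one_self_aux le_trans one_le_exp_iff zero_le_numeral exp_ge_one_plus_x_over_n_power_n order.trans) 
      have x0: "0 < x" using x1 by simp
      have lx: "ln \<mu> \<le> ln x" using lm1 lt xt t0 x0 by (meson ln_le_cancel_iff order.trans one_le_numeral)
      have "(ln x - ln \<mu>)\<^sup>2 \<le> (ln x)\<^sup>2" using lx lm0 by (intro power_mono) auto
      also have "\<dots> \<le> 4 * x" by (rule ln_sq_le[OF x1])
      finally have l4: "(ln x - ln \<mu>)\<^sup>2 \<le> 4 * x" .
      have "exp (- x * (1 / \<mu>)) = exp (- x / (2 * \<mu>)) * exp (- x / (2 * \<mu>))"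
        by (simp add: exp_add[symmetric] field_simps)
      also have "\<dots> \<le> exp (- x / (2 * \<mu>)) * exp (- t / (2 * \<mu>))"
        using xt m0 by (intro mult_left_mono) (auto simp: divide_right_mono)
      finally have ee: "exp (- x * (1 / \<mu>)) \<le> exp (- x / (2 * \<mu>)) * exp (- t / (2 * \<mu>))" .
      have "exponential_density (1 / \<mu>) x * (ln (dlt t x) - ln \<mu>)\<^sup>2 = (1 / \<mu>) * exp (- x * (1 / \<mu>)) * (ln x - ln \<mu>)\<^sup>2"
        using xt x0 by (simp add: dlt_def exponential_density_def)
      also have "\<dots> \<le> (1 / \<mu>) * (exp (- x / (2 * \<mu>)) * exp (- t / (2 * \<mu>))) * (4 * x)"
        using ee l4 m0 by (intro mult_mono) auto
      also have "\<dots> = c * (exponential_density (1 / (2 * \<mu>)) x * x)"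
        using x0 m0 by (simp add: c_def exponential_density_def field_simps)
      finally show ?thesis using f0 by (smt (verit) zero_le_power2 mult_nonneg_nonneg)
    qed
    then show ?thesis
      using f0 g0 c0 by (simp add: ennreal_mult[symmetric] ennreal_plus[symmetric] del: ennreal_plus)
  qed
  have "rsk (dlt t) \<mu> \<le> (\<integral>\<^sup>+ x. ennreal ((ln \<mu>)\<^sup>2) * ennreal (exponential_density (1 / \<mu>) x)
        + ennreal c * ennreal (exponential_density (1 / (2 * \<mu>)) x * x) \<partial>lborel)"
    unfolding rsk_def by (rule nn_integral_mono) (rule pw)
  also have "\<dots> = ennreal ((ln \<mu>)\<^sup>2) * (\<integral>\<^sup>+ x. ennreal (exponential_density (1 / \<mu>) x) \<partial>lborel)
        + ennreal c * (\<integral>\<^sup>+ x. ennreal (exponential_density (1 / (2 * \<mu>)) x * x) \<partial>lborel)"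
    apply (subst nn_integral_add)
      apply measurable
    apply (subst (1 2) nn_integral_cmult)
      apply measurable
    done
  also have "\<dots> = ennreal ((ln \<mu>)\<^sup>2) + ennreal c * ennreal (2 * \<mu>)"
    using m0 by (simp add: mom0 mom1)
  also have "\<dots> = ennreal ((ln \<mu>)\<^sup>2 + 16 * \<mu> * exp (- t / (2 * \<mu>)))"
    using c0 m0 by (simp add: ennreal_mult[symmetric] ennreal_plus[symmetric] c_def del: ennreal_plus)
  finally show ?thesis .
qed
lemma upper_big:
  fixes t \<mu> :: real
  assumes t: "exp 2 \<le> t" and mu: "exp 1 \<le> \<mu>"
  shows "rsk (dlt t) \<mu> \<le> ennreal ((ln \<mu>)\<^sup>2 * (1 - exp (- (1 / \<mu>) * t)) + 6)"
proof -
  have t0: "0 < t" using t by (meson exp_gt_zero less_le_trans)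
  have lt: "2 \<le> ln t" using t t0 by (metis ln_exp ln_le_cancel_iff exp_gt_zero)
  have m0: "0 < \<mu>" using mu by (meson exp_gt_zero less_le_trans)
  have lm1: "1 \<le> ln \<mu>" using mu m0 by (metis ln_exp ln_le_cancel_iff exp_gt_zero)
  have pw: "ennreal (exponential_density (1 / \<mu>) x * (ln (dlt t x) - ln \<mu>)\<^sup>2)
      \<le> ennreal ((ln \<mu>)\<^sup>2) * (ennreal (exponential_density (1 / \<mu>) x) * indicator {..t} x)
        + ennreal (1 / \<mu>) * ennreal (indicator {t..\<mu>} x * (ln \<mu> - ln x)\<^sup>2)
        + ennreal (4 / \<mu>) * ennreal (exponential_density (1 / \<mu>) x * x)" for x
  proof -
    have f0: "0 \<le> exponential_density (1 / \<mu>) x" using m0 by (simp add: exponential_density_def)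
    have g0: "0 \<le> exponential_density (1 / \<mu>) x * x"
      using m0 by (simp add: exponential_density_def)
    have h0: "0 \<le> indicator {t..\<mu>} x * (ln \<mu> - ln x)\<^sup>2" by simp
    have "exponential_density (1 / \<mu>) x * (ln (dlt t x) - ln \<mu>)\<^sup>2
        \<le> (ln \<mu>)\<^sup>2 * (exponential_density (1 / \<mu>) x * indicator {..t} x)
          + (1 / \<mu>) * (indicator {t..\<mu>} x * (ln \<mu> - ln x)\<^sup>2)
          + (4 / \<mu>) * (exponential_density (1 / \<mu>) x * x)"
    proof (cases "x < t")
      case True
      then have "exponential_density (1 / \<mu>) x * (ln (dlt t x) - ln \<mu>)\<^sup>2
         = (ln \<mu>)\<^sup>2 * (exponential_density (1 / \<mu>) x * indicator {..t} x)"
        by (simp add: dlt_def indicator_def)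
      moreover have "0 \<le> (1 / \<mu>) * (indicator {t..\<mu>} x * (ln \<mu> - ln x)\<^sup>2)" using m0 by simp
      moreover have "0 \<le> (4 / \<mu>) * (exponential_density (1 / \<mu>) x * x)" using m0 g0 by simp
      ultimately show ?thesis by linarith
    next
      case False
      then have xt: "t \<le> x" by simp
      have x0: "0 < x" using xt t0 by simp
      have A: "0 \<le> (ln \<mu>)\<^sup>2 * (exponential_density (1 / \<mu>) x * indicator {..t} x)" using f0 by simp
      show ?thesis
      proof (cases "x \<le> \<mu>")
        case True
        have "exponential_density (1 / \<mu>) x * (ln (dlt t x) - ln \<mu>)\<^sup>2
            = ((1 / \<mu>) * exp (- x * (1 / \<mu>))) * (ln \<mu> - ln x)\<^sup>2"
          using xt x0 by (simp add: dlt_def exponential_density_def power2_commute)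
        also have "\<dots> \<le> (1 / \<mu>) * (ln \<mu> - ln x)\<^sup>2"
        proof (intro mult_right_mono)
          have "exp (- x * (1 / \<mu>)) \<le> 1" using x0 m0 by simp
          then show "1 / \<mu> * exp (- x * (1 / \<mu>)) \<le> 1 / \<mu>" using m0
            by (metis mult.right_neutral mult_left_mono less_eq_real_def zero_less_divide_1_iff)
        qed simp
        also have "\<dots> = (1 / \<mu>) * (indicator {t..\<mu>} x * (ln \<mu> - ln x)\<^sup>2)"
          using xt True by simp
        finally show ?thesis using A m0 g0 by (smt (verit) divide_nonneg_nonneg mult_nonneg_nonneg)
      next
        case False
        then have xm: "1 \<le> x / \<mu>" using m0 by simp
        have "(ln x - ln \<mu>)\<^sup>2 = (ln (x / \<mu>))\<^sup>2" using x0 m0 by (simp add: ln_div)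
        also have "\<dots> \<le> 4 * (x / \<mu>)" by (rule ln_sq_le[OF xm])
        finally have l4: "(ln x - ln \<mu>)\<^sup>2 \<le> 4 * (x / \<mu>)" .
        have "exponential_density (1 / \<mu>) x * (ln (dlt t x) - ln \<mu>)\<^sup>2
            = exponential_density (1 / \<mu>) x * (ln x - ln \<mu>)\<^sup>2"
          using xt by (simp add: dlt_def)
        also have "\<dots> \<le> exponential_density (1 / \<mu>) x * (4 * (x / \<mu>))"
          using l4 f0 by (rule mult_left_mono)
        also have "\<dots> = (4 / \<mu>) * (exponential_density (1 / \<mu>) x * x)" by simp
        finally show ?thesis using A m0 h0 by (smt (verit) divide_nonneg_nonneg mult_nonneg_nonneg)
      qed
    qed
    then show ?thesis
      using f0 g0 h0 m0 by (simp add: ennreal_mult[symmetric] ennreal_plus[symmetric] ennreal_indicator[symmetric] del: ennreal_plus)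
  qed
  have "rsk (dlt t) \<mu> \<le> (\<integral>\<^sup>+ x. ennreal ((ln \<mu>)\<^sup>2) * (ennreal (exponential_density (1 / \<mu>) x) * indicator {..t} x)
        + ennreal (1 / \<mu>) * ennreal (indicator {t..\<mu>} x * (ln \<mu> - ln x)\<^sup>2)
        + ennreal (4 / \<mu>) * ennreal (exponential_density (1 / \<mu>) x * x) \<partial>lborel)"
    unfolding rsk_def by (rule nn_integral_mono) (rule pw)
  also have "\<dots> = ennreal ((ln \<mu>)\<^sup>2) * (\<integral>\<^sup>+ x. ennreal (exponential_density (1 / \<mu>) x) * indicator {..t} x \<partial>lborel)
        + ennreal (1 / \<mu>) * (\<integral>\<^sup>+ x. ennreal (indicator {t..\<mu>} x * (ln \<mu> - ln x)\<^sup>2) \<partial>lborel)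
        + ennreal (4 / \<mu>) * (\<integral>\<^sup>+ x. ennreal (exponential_density (1 / \<mu>) x * x) \<partial>lborel)"
    apply (subst nn_integral_add)
      apply measurable
    apply (subst nn_integral_add)
      apply measurable
    apply (subst (1 2 3) nn_integral_cmult)
      apply measurable
    done
  also have "\<dots> \<le> ennreal ((ln \<mu>)\<^sup>2) * ennreal (1 - exp (- (1 / \<mu>) * t))
        + ennreal (1 / \<mu>) * ennreal (2 * \<mu>) + ennreal (4 / \<mu>) * ennreal \<mu>"
    using m0 t0 by (intro add_mono mult_left_mono order.refl ftc_ln2)
       (simp_all add: nn_integral_erlang_density erlang_CDF_0 mom1)
  also have "\<dots> = ennreal ((ln \<mu>)\<^sup>2 * (1 - exp (- (1 / \<mu>) * t))) + 2 + 4"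
    using m0 t0 by (simp add: ennreal_mult[symmetric] del: ennreal_plus)
  also have "\<dots> = ennreal ((ln \<mu>)\<^sup>2 * (1 - exp (- (1 / \<mu>) * t)) + 6)"
  proof -
    have "0 \<le> (ln \<mu>)\<^sup>2 * (1 - exp (- (1 / \<mu>) * t))" using m0 t0 by simp
    then show ?thesis by (simp add: add.assoc)
  qed
  finally show ?thesis .
qed
lemma upper_rsk:
  fixes t \<mu> p :: real
  assumes t: "exp 2 \<le> t" and mu: "1 \<le> \<mu>" and p: "0 < p" "p < 2"
  shows "rsk (dlt t) \<mu> \<le> ennreal (16 * exp 1 * exp (- t / (2 * exp 1)) + (ln t powr (2 - p) + 6) * ln \<mu> powr p)"
proof -
  have t0: "0 < t" using t by (meson exp_gt_zero less_le_trans)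
  have lt: "2 \<le> ln t" using t t0 by (metis ln_exp ln_le_cancel_iff exp_gt_zero)
  have m0: "0 < \<mu>" using mu by simp
  have lm0: "0 \<le> ln \<mu>" using mu by simp
  define lam where "lam = ln t powr (2 - p) + 6"
  have lam1: "1 \<le> lam" unfolding lam_def by simp
  have A0: "0 \<le> 16 * exp 1 * exp (- t / (2 * exp 1))" by simp
  have lp0: "0 \<le> ln \<mu> powr p" by simp
  show ?thesis
  proof (cases "\<mu> \<le> exp 1")
    case True
    have lm1: "ln \<mu> \<le> 1" using True m0 by (metis ln_exp ln_le_cancel_iff exp_gt_zero)
    have sq: "(ln \<mu>)\<^sup>2 \<le> ln \<mu> powr p"
    proof (cases "ln \<mu> = 0")
      case True then show ?thesis by simp
    next
      case False
      then have "0 < ln \<mu>" using lm0 by simp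
      then have "(ln \<mu>)\<^sup>2 = ln \<mu> powr 2" by (simp add: powr_numeral)
      also have "\<dots> \<le> ln \<mu> powr p" using p lm0 lm1 by (intro powr_mono') auto
      finally show ?thesis .
    qed
    also have "\<dots> \<le> lam * ln \<mu> powr p" using lam1 lp0 by (simp add: mult_le_cancel_right1)
    finally have sq': "(ln \<mu>)\<^sup>2 \<le> lam * ln \<mu> powr p" .
    have "exp (- t / (2 * \<mu>)) \<le> exp (- t / (2 * exp 1))"
      using True m0 t0 by (simp add: frac_le)
    then have "16 * \<mu> * exp (- t / (2 * \<mu>)) \<le> 16 * exp 1 * exp (- t / (2 * exp 1))"
      using True m0 by (intro mult_mono) auto
    with sq' have "(ln \<mu>)\<^sup>2 + 16 * \<mu> * exp (- t / (2 * \<mu>))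
        \<le> 16 * exp 1 * exp (- t / (2 * exp 1)) + lam * ln \<mu> powr p" by linarith
    then have "ennreal ((ln \<mu>)\<^sup>2 + 16 * \<mu> * exp (- t / (2 * \<mu>)))
        \<le> ennreal (16 * exp 1 * exp (- t / (2 * exp 1)) + lam * ln \<mu> powr p)" by (rule ennreal_leI)
    with upper_small[OF t mu True] show ?thesis unfolding lam_def by (rule order.trans)
  next
    case False
    then have mu': "exp 1 \<le> \<mu>" by simp
    have lm1: "1 \<le> ln \<mu>" using mu' m0 by (metis ln_exp ln_le_cancel_iff exp_gt_zero)
    have six: "6 \<le> 6 * ln \<mu> powr p" using lm1 p ge_one_powr_ge_zero[of "ln \<mu>" p] by simp
    have main: "(ln \<mu>)\<^sup>2 * (1 - exp (- (1 / \<mu>) * t)) \<le> ln t powr (2 - p) * ln \<mu> powr p"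
    proof (cases "\<mu> \<le> t")
      case True
      have "(ln \<mu>)\<^sup>2 * (1 - exp (- (1 / \<mu>) * t)) \<le> (ln \<mu>)\<^sup>2 * 1"
        using m0 t0 by (intro mult_left_mono) auto
      also have "\<dots> = ln \<mu> powr (2 - p) * ln \<mu> powr p"
        using lm1 by (simp add: powr_add[symmetric] powr_numeral)
      also have "\<dots> \<le> ln t powr (2 - p) * ln \<mu> powr p"
        using True p m0 lm1 mu by (intro mult_right_mono powr_mono2) auto
      finally show ?thesis .
    next
      case False
      have "1 - exp (- (1 / \<mu>) * t) \<le> t / \<mu>"
        using exp_ge_add_one_self[of "- (1 / \<mu>) * t"] by simp
      then have "(ln \<mu>)\<^sup>2 * (1 - exp (- (1 / \<mu>) * t)) \<le> (ln \<mu>)\<^sup>2 * (t / \<mu>)"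
        by (intro mult_left_mono) auto
      also have "\<dots> \<le> ln t powr (2 - p) * ln \<mu> powr p"
        using False by (intro big_mu t0 lt p) simp
      finally show ?thesis .
    qed
    have "(ln \<mu>)\<^sup>2 * (1 - exp (- (1 / \<mu>) * t)) + 6
        \<le> 16 * exp 1 * exp (- t / (2 * exp 1)) + lam * ln \<mu> powr p"
    proof -
      have "lam * ln \<mu> powr p = ln t powr (2 - p) * ln \<mu> powr p + 6 * ln \<mu> powr p"
        unfolding lam_def by (simp add: algebra_simps)
      then show ?thesis using main six A0 by linarith
    qed
    then have "ennreal ((ln \<mu>)\<^sup>2 * (1 - exp (- (1 / \<mu>) * t)) + 6)
        \<le> ennreal (16 * exp 1 * exp (- t / (2 * exp 1)) + lam * ln \<mu> powr p)" by (rule ennreal_leI)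
    with upper_big[OF t mu'] show ?thesis unfolding lam_def by (rule order.trans)
  qed
qed

lemma sup_bound:
  assumes F: "F \<in> prior_class p \<eta>" and [measurable]: "\<delta> \<in> borel_measurable borel"
    and A: "0 \<le> A" and lam: "0 \<le> lam"
    and b: "\<And>\<mu>. 1 \<le> \<mu> \<Longrightarrow> rsk \<delta> \<mu> \<le> ennreal (A + lam * ln \<mu> powr p)"
  shows "bayes_risk F \<delta> \<le> ennreal (A + lam * \<eta> powr p)"
proof -
  from F have ps: "prob_space F" and ss: "sets F = sets borel" and em: "emeasure F {..<1} = 0"
    and ip: "(\<integral>\<^sup>+ \<mu>. ennreal ((ln \<mu>) powr p) \<partial>F) \<le> ennreal (\<eta> powr p)"
    unfolding prior_class_def by auto
  have mc: "borel_measurable F = borel_measurable borel" by (rule measurable_cong_sets[OF ss refl])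
  have sp: "space F = UNIV" using sets_eq_imp_space_eq[OF ss] by simp
  have ae: "AE \<mu> in F. 1 \<le> \<mu>"
  proof (rule AE_I')
    show "{..<1::real} \<in> null_sets F" using em ss by (intro null_setsI) auto
  qed auto
  have "bayes_risk F \<delta> = (\<integral>\<^sup>+ \<mu>. rsk \<delta> \<mu> \<partial>F)"
    unfolding bayes_risk_def rsk_def ..
  also have "\<dots> \<le> (\<integral>\<^sup>+ \<mu>. ennreal A + ennreal lam * ennreal (ln \<mu> powr p) \<partial>F)"
  proof (rule nn_integral_mono_AE)
    show "AE \<mu> in F. rsk \<delta> \<mu> \<le> ennreal A + ennreal lam * ennreal (ln \<mu> powr p)"
      using ae
    proof eventually_elim
      case (elim \<mu>)
      show ?case using b[OF elim] A lam by (simp add: ennreal_mult)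
    qed
  qed
  also have "\<dots> = ennreal A * emeasure F (space F) + ennreal lam * (\<integral>\<^sup>+ \<mu>. ennreal (ln \<mu> powr p) \<partial>F)"
    apply (subst nn_integral_add)
      apply (simp_all add: mc)
    apply (subst nn_integral_cmult)
     apply (simp_all add: mc)
    done
  also have "\<dots> \<le> ennreal A * 1 + ennreal lam * ennreal (\<eta> powr p)"
    using prob_space.emeasure_space_1[OF ps] ip by (intro add_mono mult_left_mono) auto
  also have "\<dots> = ennreal (A + lam * \<eta> powr p)"
    using A lam by (simp add: ennreal_mult)
  finally show ?thesis .
qed

theorem theorem2p3:
  fixes p :: real
  assumes "0 < p" and "p < 2"
  shows "((\<lambda>\<eta>. enn2real (minimax_bayes_risk p \<eta>) /
            (\<eta> powr p * (ln (ln (1 / \<eta>))) powr (2 - p))) \<longlongrightarrow> 1) (at_right 0)"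
proof -
  note p = assms
  define T where "T \<eta> = ln (1 / \<eta>)" for \<eta> :: real
  define t where "t \<eta> = 2 * exp 1 * (p + 1) * T \<eta>" for \<eta>
  define U where "U \<eta> = 16 * exp 1 * \<eta> powr (p + 1) + (ln (t \<eta>) powr (2 - p) + 6) * \<eta> powr p" for \<eta>
  define M where "M \<eta> = T \<eta> / ln (T \<eta>)" for \<eta>
  define eps where "eps \<eta> = (\<eta> / ln (M \<eta>)) powr p" for \<eta>
  define B where "B \<eta> = (ln (M \<eta>))\<^sup>2 * (1 - 1 / (M \<eta> * (1 - eps \<eta>))) * eps \<eta> * (1 - exp (- ln (1 / eps \<eta>) / M \<eta>))" for \<eta>
  define D where "D \<eta> = \<eta> powr p * (ln (ln (1 / \<eta>))) powr (2 - p)" for \<eta> :: real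
  have limU: "((\<lambda>\<eta>. U \<eta> / D \<eta>) \<longlongrightarrow> 1) (at_right 0)"
    unfolding U_def D_def t_def T_def using p by real_asymp
  have limB: "((\<lambda>\<eta>. B \<eta> / D \<eta>) \<longlongrightarrow> 1) (at_right 0)"
    unfolding B_def D_def eps_def M_def T_def using p by real_asymp
  have ev1: "eventually (\<lambda>\<eta>. 0 < \<eta>) (at_right (0::real))" by (rule eventually_at_right_less)
  have ev2: "eventually (\<lambda>\<eta>. exp 2 \<le> t \<eta>) (at_right (0::real))"
    unfolding t_def T_def using p by real_asymp
  have ev3: "eventually (\<lambda>\<eta>. 1 < M \<eta>) (at_right (0::real))"
    unfolding M_def T_def by real_asymp
  have ev4: "eventually (\<lambda>\<eta>. eps \<eta> < 1) (at_right (0::real))"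
    unfolding eps_def M_def T_def using p by real_asymp
  have ev5: "eventually (\<lambda>\<eta>. 1 / (M \<eta> * (1 - eps \<eta>)) \<le> 1) (at_right (0::real))"
    unfolding eps_def M_def T_def using p by real_asymp
  have ev6: "eventually (\<lambda>\<eta>. 0 < D \<eta>) (at_right (0::real))"
    unfolding D_def using p by real_asymp
  have bounds: "eventually (\<lambda>\<eta>. B \<eta> / D \<eta> \<le> enn2real (minimax_bayes_risk p \<eta>) / D \<eta>
      \<and> enn2real (minimax_bayes_risk p \<eta>) / D \<eta> \<le> U \<eta> / D \<eta>) (at_right 0)"
    using ev1 ev2 ev3 ev4 ev5 ev6
  proof eventually_elim
    case (elim \<eta>)
    then have e0: "0 < \<eta>" and tt: "exp 2 \<le> t \<eta>" and M1: "1 < M \<eta>" and e1: "eps \<eta> < 1"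
      and k1: "1 / (M \<eta> * (1 - eps \<eta>)) \<le> 1" and D0: "0 < D \<eta>" by auto
    have L0: "0 < ln (M \<eta>)" using M1 by simp
    have ep0: "0 < eps \<eta>" unfolding eps_def using e0 L0 by simp
    have t0: "0 < t \<eta>" using tt by (meson exp_gt_zero less_le_trans)
    have est: "dlt (t \<eta>) \<in> estimators"
      unfolding estimators_def using t0 by (auto simp: dlt_def)
    have A0: "0 \<le> 16 * exp 1 * exp (- t \<eta> / (2 * exp 1))" by simp
    have lam0: "0 \<le> ln (t \<eta>) powr (2 - p) + 6" by simp
    have up: "minimax_bayes_risk p \<eta> \<le> ennreal (U \<eta>)"
    proof -
      have "minimax_bayes_risk p \<eta> \<le> (SUP F\<in>prior_class p \<eta>. bayes_risk F (dlt (t \<eta>)))"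
        unfolding minimax_bayes_risk_def by (rule INF_lower[OF est])
      also have "\<dots> \<le> ennreal (U \<eta>)"
      proof (rule SUP_least)
        fix F assume F: "F \<in> prior_class p \<eta>"
        have Aeq: "exp (- t \<eta> / (2 * exp 1)) = \<eta> powr (p + 1)"
          unfolding t_def T_def powr_def using e0 by (simp add: ln_div field_simps)
        have "bayes_risk F (dlt (t \<eta>)) \<le> ennreal (16 * exp 1 * exp (- t \<eta> / (2 * exp 1)) + (ln (t \<eta>) powr (2 - p) + 6) * \<eta> powr p)"
          by (rule sup_bound[OF F dlt_meas A0 lam0 upper_rsk[OF tt _ p]])
        then show "bayes_risk F (dlt (t \<eta>)) \<le> ennreal (U \<eta>)"
          unfolding U_def Aeq .
      qed
      finally show ?thesis .
    qed
    have B0: "0 \<le> B \<eta>"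
    proof -
      have "0 \<le> 1 - 1 / (M \<eta> * (1 - eps \<eta>))" using k1 by simp
      moreover have "0 \<le> 1 - exp (- ln (1 / eps \<eta>) / M \<eta>)"
        using ep0 e1 M1 by simp
      ultimately show ?thesis unfolding B_def using ep0 by simp
    qed
    have lo: "ennreal (B \<eta>) \<le> minimax_bayes_risk p \<eta>"
      unfolding minimax_bayes_risk_def
    proof (rule INF_greatest)
      fix \<delta> assume "\<delta> \<in> estimators"
      then have dm: "\<delta> \<in> borel_measurable borel" unfolding estimators_def by simp
      have pc: "tp (eps \<eta>) (M \<eta>) \<in> prior_class p \<eta>"
      proof (rule tp_prior)
        have "(\<eta> / ln (M \<eta>) * ln (M \<eta>)) powr p = (\<eta> / ln (M \<eta>)) powr p * ln (M \<eta>) powr p"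
          by (rule powr_mult; use e0 L0 in simp)
        then have "eps \<eta> * ln (M \<eta>) powr p = (\<eta> / ln (M \<eta>) * ln (M \<eta>)) powr p"
          unfolding eps_def by simp
        also have "\<dots> = \<eta> powr p" using L0 by simp
        finally show "eps \<eta> * ln (M \<eta>) powr p \<le> \<eta> powr p" by simp
      qed (use ep0 e1 M1 p in auto)
      have "ennreal (B \<eta>) \<le> ennreal (1 - eps \<eta>) * rsk \<delta> 1 + ennreal (eps \<eta>) * rsk \<delta> (M \<eta>)"
        unfolding B_def by (rule lower_risk[OF dm ep0 e1 M1 k1])
      also have "\<dots> = bayes_risk (tp (eps \<eta>) (M \<eta>)) \<delta>"
        using ep0 e1 by (simp add: tp_risk[OF dm])
      also have "\<dots> \<le> (SUP F\<in>prior_class p \<eta>. bayes_risk F \<delta>)"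
        by (rule SUP_upper[OF pc])
      finally show "ennreal (B \<eta>) \<le> (SUP F\<in>prior_class p \<eta>. bayes_risk F \<delta>)" .
    qed
    have fin: "minimax_bayes_risk p \<eta> < \<top>" using up by (simp add: le_less_trans)
    have r1: "B \<eta> \<le> enn2real (minimax_bayes_risk p \<eta>)"
      using enn2real_mono[OF lo fin] B0 by simp
    have r2: "enn2real (minimax_bayes_risk p \<eta>) \<le> U \<eta>"
    proof -
      have "0 \<le> U \<eta>" unfolding U_def using lam0 by simp
      then show ?thesis using enn2real_mono[OF up] by simp
    qed
    show ?case using r1 r2 D0 by (simp add: divide_right_mono)
  qed
  have "((\<lambda>\<eta>. enn2real (minimax_bayes_risk p \<eta>) / D \<eta>) \<longlongrightarrow> 1) (at_right 0)"
    by (rule tendsto_sandwich[OF _ _ limB limU]) (use bounds in \<open>auto elim: eventually_mono\<close>)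
  then show ?thesis unfolding D_def .
qed

end
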